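(* For all positive integers $m$ and all $p,q\in[0,1]$, \[ \ell_1(\mathrm{Bin}(m,p),\mathrm{Bin}(m,q))\ge\frac1{350}\min\left(m|p-q|,\frac{\sqrt m\,|p-q|}{\sqrt{p(1-p)}},1\right). \]
   Context: $\ell_1(P,Q)=\sum_x|P(x)-Q(x)|$. When $p(1-p)=0$ the middle term is interpreted as $+\infty$ if $p\ne q$. *)

theory Defs
  imports "HOL-Probability.Probability"
begin

definition l1_dist :: "nat pmf \<Rightarrow> nat pmf \<Rightarrow> real" where
  "l1_dist P Q = (\<Sum>\<^sub>\<infinity>x. \<bar>pmf P x - pmf Q x\<bar>)"

definition mid_term :: "nat \<Rightarrow> real \<Rightarrow> real \<Rightarrow> ereal" where
  "mid_term m p q =
     (if p * (1 - p) = 0 then (if p = q then 0 else \<infinity>)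
      else ereal (sqrt (real m) * \<bar>p - q\<bar> / sqrt (p * (1 - p))))"

end

theory Submission
  imports Defs
begin

definition bb :: "nat \<Rightarrow> real \<Rightarrow> nat \<Rightarrow> real" where
  "bb n s k = real (n choose k) * s ^ k * (1 - s) ^ (n - k)"

lemma bb_nonneg: "0 \<le> s \<Longrightarrow> s \<le> 1 \<Longrightarrow> 0 \<le> bb n s k"
  unfolding bb_def by simp

lemma bb_zero: "n < k \<Longrightarrow> bb n s k = 0"
  unfolding bb_def by simp

lemma bb_sum1: "(\<Sum>k\<le>n. bb n s k) = 1"
proof -
  have "(\<Sum>k\<le>n. bb n s k) = (s + (1 - s)) ^ n"
    unfolding bb_def by (subst binomial_ring) (simp add: atLeast0AtMost mult_ac)
  then show ?thesis by simp
qed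

lemma bb_Suc: "bb (Suc n) s (Suc j) * real (Suc j) = real (Suc n) * s * bb n s j"
proof -
  have h: "real (Suc j) * real (Suc n choose Suc j) = real (Suc n) * real (n choose j)"
    using Suc_times_binomial[of j n] by (metis of_nat_mult)
  have "bb (Suc n) s (Suc j) * real (Suc j) = (real (Suc j) * real (Suc n choose Suc j)) * s * (s^j * (1-s)^(n-j))"
    unfolding bb_def by (simp only: power_Suc diff_Suc_Suc mult_ac)
  also have "\<dots> = real (Suc n) * s * bb n s j"
    unfolding h bb_def by (simp only: mult_ac)
  finally show ?thesis .
qed

lemma bb_sum2: "(\<Sum>k\<le>n. real k * bb n s k) = real n * s"
proof (cases n)
  case 0 then show ?thesis by simp
next
  case (Suc n')
  have "(\<Sum>k\<le>n. real k * bb n s k) = (\<Sum>j\<le>n'. real (Suc j) * bb (Suc n') s (Suc j))"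
    unfolding Suc by (subst sum.atMost_Suc_shift) simp
  also have "\<dots> = (\<Sum>j\<le>n'. real (Suc n') * s * bb n' s j)"
    by (intro sum.cong refl) (metis bb_Suc mult.commute)
  also have "\<dots> = real (Suc n') * s"
    by (simp add: sum_distrib_left[symmetric] bb_sum1)
  finally show ?thesis using Suc by simp
qed

lemma bb_sum3: "(\<Sum>k\<le>n. real k * (real k - 1) * bb n s k) = real n * (real n - 1) * s^2"
proof (cases n)
  case 0 then show ?thesis by simp
next
  case (Suc n')
  have "(\<Sum>k\<le>n. real k * (real k - 1) * bb n s k) = (\<Sum>j\<le>n'. real j * (real (Suc j) * bb (Suc n') s (Suc j)))"
    unfolding Suc by (subst sum.atMost_Suc_shift) (simp add: algebra_simps)
  also have "\<dots> = (\<Sum>j\<le>n'. real (Suc n') * s * (real j * bb n' s j))"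
  proof (intro sum.cong refl)
    fix j assume "j \<in> {..n'}"
    have "real j * (real (Suc j) * bb (Suc n') s (Suc j)) = real j * (bb (Suc n') s (Suc j) * real (Suc j))"
      by (simp only: mult_ac)
    also have "\<dots> = real (Suc n') * s * (real j * bb n' s j)" unfolding bb_Suc by (simp only: mult_ac)
    finally show "real j * (real (Suc j) * bb (Suc n') s (Suc j)) = real (Suc n') * s * (real j * bb n' s j)" .
  qed
  also have "\<dots> = real (Suc n') * s * (real n' * s)"
    by (simp add: sum_distrib_left[symmetric] bb_sum2)
  finally show ?thesis using Suc by (simp add: power2_eq_square)
qed

lemma bb_var: "(\<Sum>k\<le>n. (real k - real n * s)^2 * bb n s k) = real n * s * (1 - s)"
proof -
  have e: "(\<Sum>k\<le>n. real k * (real k - 1) * bb n s k) = (\<Sum>k\<le>n. real k * real k * bb n s k) - (\<Sum>k\<le>n. real k * bb n s k)"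
    by (simp add: sum_subtractf[symmetric] algebra_simps)
  have "(\<Sum>k\<le>n. (real k - real n * s)^2 * bb n s k) =
     (\<Sum>k\<le>n. real k * (real k - 1) * bb n s k) + (1 - 2 * real n * s) * (\<Sum>k\<le>n. real k * bb n s k)
     + (real n * s)^2 * (\<Sum>k\<le>n. bb n s k)"
    by (simp add: sum_distrib_left sum.distrib[symmetric] power2_eq_square algebra_simps)
  also have "\<dots> = real n * s * (1 - s)"
    using e bb_sum3[of n s] by (simp add: bb_sum1 bb_sum2 power2_eq_square algebra_simps)
  finally show ?thesis .
qed

lemma bb_cheb:
  assumes s: "0 \<le> s" "s \<le> 1" and L: "L > 0" and fin: "finite W"
    and W: "\<And>k. k \<le> n \<Longrightarrow> \<bar>real k - real n * s\<bar> < L \<Longrightarrow> k \<in> W"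
  shows "(\<Sum>k\<in>W. bb n s k) \<ge> 1 - real n * s * (1 - s) / L^2"
proof -
  let ?I = "{k. k \<le> n \<and> k \<in> W}" and ?O = "{k. k \<le> n \<and> k \<notin> W}"
  have split: "(\<Sum>k\<le>n. bb n s k) = (\<Sum>k\<in>?I. bb n s k) + (\<Sum>k\<in>?O. bb n s k)"
    by (subst sum.union_disjoint[symmetric]) (auto intro!: sum.cong)
  have "(\<Sum>k\<in>?O. bb n s k) \<le> (\<Sum>k\<in>?O. (real k - real n * s)^2 / L^2 * bb n s k)"
  proof (intro sum_mono)
    fix k assume k: "k \<in> ?O"
    then have "\<bar>real k - real n * s\<bar> \<ge> L" using W by force
    then have "L^2 \<le> (real k - real n * s)^2"
      using L by (metis abs_le_square_iff abs_of_pos less_le)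
    then have "1 \<le> (real k - real n * s)^2 / L^2" using L by simp
    then show "bb n s k \<le> (real k - real n * s)^2 / L^2 * bb n s k"
      using bb_nonneg[OF s, of n k] by (metis mult_le_cancel_right1 order.trans order_refl
          mult_right_mono mult_1)
  qed
  also have "\<dots> \<le> (\<Sum>k\<le>n. (real k - real n * s)^2 / L^2 * bb n s k)"
    by (intro sum_mono2) (auto intro!: divide_nonneg_nonneg mult_nonneg_nonneg bb_nonneg s)
  also have "\<dots> = real n * s * (1 - s) / L^2"
    using bb_var[of n s] by (simp add: sum_divide_distrib[symmetric])
  finally have o: "(\<Sum>k\<in>?O. bb n s k) \<le> real n * s * (1 - s) / L^2" .
  have "(\<Sum>k\<in>?I. bb n s k) \<le> (\<Sum>k\<in>W. bb n s k)"
    by (intro sum_mono2 fin) (auto intro!: bb_nonneg s)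
  then show ?thesis using split o bb_sum1[of n s] by linarith
qed

lemma d1: "((\<lambda>s. s ^ k) has_real_derivative real k * s ^ (k - 1)) (at (s::real))"
  by (auto intro!: derivative_eq_intros)
lemma d2: "((\<lambda>s. (1 - s) ^ k) has_real_derivative - (real k * (1 - s) ^ (k - 1))) (at (s::real))"
  by (auto intro!: derivative_eq_intros)

lemma bb_term_deriv:
  "((\<lambda>s. bb (Suc m) s (Suc t)) has_real_derivative
      (real (Suc m) * bb m s t - real (Suc m) * bb m s (Suc t))) (at s)"
proof -
  have h1: "real (Suc t) * real (Suc m choose Suc t) = real (Suc m) * real (m choose t)"
    using Suc_times_binomial[of t m] by (metis of_nat_mult)
  have h2: "real (Suc m - Suc t) * real (Suc m choose Suc t) = real (Suc m) * real (m choose Suc t)"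
    using binomial_absorb_comp[of "Suc m" "Suc t"] by (metis of_nat_mult diff_Suc_1)
  have "((\<lambda>s. real (Suc m choose Suc t) * (s ^ Suc t * (1 - s) ^ (m - t))) has_real_derivative
     real (Suc m choose Suc t) * (real (Suc t) * s ^ (Suc t - 1) * (1 - s) ^ (m - t)
        + - (real (m - t) * (1 - s) ^ (m - t - 1)) * s ^ Suc t)) (at s)"
    by (intro DERIV_cmult DERIV_mult d1 d2)
  then have "((\<lambda>s. real (Suc m choose Suc t) * s ^ Suc t * (1 - s) ^ (Suc m - Suc t)) has_real_derivative
     real (Suc m choose Suc t) * (real (Suc t) * s ^ t * (1 - s) ^ (m - t)
        - s ^ Suc t * (real (m - t) * (1 - s) ^ (m - t - 1)))) (at s)"
    by (simp only: diff_Suc_1 diff_Suc_Suc mult.assoc) (simp add: algebra_simps)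
  moreover have "real (Suc m choose Suc t) * (real (Suc t) * s ^ t * (1 - s) ^ (m - t)
        - s ^ Suc t * (real (m - t) * (1 - s) ^ (m - t - 1))) =
        real (Suc m) * bb m s t - real (Suc m) * bb m s (Suc t)"
  proof -
    have a: "real (Suc m choose Suc t) * (real (Suc t) * s ^ t * (1 - s) ^ (m - t)) = real (Suc m) * bb m s t"
    proof -
      have "real (Suc m choose Suc t) * (real (Suc t) * s ^ t * (1 - s) ^ (m - t)) =
        (real (Suc t) * real (Suc m choose Suc t)) * (s ^ t * (1 - s) ^ (m - t))" by (simp only: mult_ac)
      also have "\<dots> = real (Suc m) * bb m s t" unfolding h1 bb_def by (simp only: mult_ac)
      finally show ?thesis .
    qed
    have b: "real (Suc m choose Suc t) * (s ^ Suc t * (real (m - t) * (1 - s) ^ (m - t - 1))) = real (Suc m) * bb m s (Suc t)"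
      using h2 unfolding bb_def by (simp add: mult_ac)
    show ?thesis using a b by (simp add: right_diff_distrib)
  qed
  ultimately show ?thesis unfolding bb_def by simp
qed

lemma F_deriv:
  "((\<lambda>s. \<Sum>k\<le>t. bb (Suc m) s k) has_real_derivative (- (real (Suc m) * bb m s t))) (at s)"
proof (induction t)
  case 0
  have "((\<lambda>s. (1 - s) ^ Suc m) has_real_derivative (- (real (Suc m) * (1 - s) ^ m))) (at s)"
    using d2[of "Suc m" s] by simp
  then show ?case by (simp add: bb_def)
next
  case (Suc t)
  have "((\<lambda>s. (\<Sum>k\<le>t. bb (Suc m) s k) + bb (Suc m) s (Suc t)) has_real_derivative
     (- (real (Suc m) * bb m s t)) + (real (Suc m) * bb m s t - real (Suc m) * bb m s (Suc t))) (at s)"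
    by (intro DERIV_add Suc bb_term_deriv)
  then show ?case by simp
qed

lemma partial_le:
  "\<bar>(\<Sum>k\<le>t. bb M p k) - (\<Sum>k\<le>t. bb M q k)\<bar> \<le> (\<Sum>k\<le>M. \<bar>bb M p k - bb M q k\<bar>)"
proof -
  have "\<bar>(\<Sum>k\<le>t. bb M p k) - (\<Sum>k\<le>t. bb M q k)\<bar> \<le> (\<Sum>k\<le>t. \<bar>bb M p k - bb M q k\<bar>)"
    by (simp add: sum_subtractf[symmetric] sum_abs)
  also have "\<dots> = (\<Sum>k\<in>{..t} \<inter> {..M}. \<bar>bb M p k - bb M q k\<bar>)"
  proof (rule sum.mono_neutral_right)
    show "\<forall>i\<in>{..t} - {..t} \<inter> {..M}. \<bar>bb M p i - bb M q i\<bar> = 0"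
    proof
      fix i assume "i \<in> {..t} - {..t} \<inter> {..M}"
      then have "M < i" by auto
      then show "\<bar>bb M p i - bb M q i\<bar> = 0" by (simp add: bb_zero)
    qed
  qed auto
  also have "\<dots> \<le> (\<Sum>k\<le>M. \<bar>bb M p k - bb M q k\<bar>)"
    by (intro sum_mono2) auto
  finally show ?thesis .
qed

lemma var_le:
  fixes p s q r :: real
  assumes "0 \<le> p" "p \<le> s" "s \<le> q" "q \<le> 1" "r = p \<or> r = q"
  shows "s * (1 - s) \<le> r * (1 - r) + (q - p)"
proof -
  have "s * (1 - s) - r * (1 - r) = (s - r) * (1 - s - r)" by algebra
  also have "\<dots> \<le> \<bar>s - r\<bar> * \<bar>1 - s - r\<bar>" by (metis abs_ge_self abs_mult)
  also have "\<dots> \<le> (q - p) * 1"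
    using assms by (intro mult_mono) auto
  finally show ?thesis by simp
qed

lemma core:
  fixes m :: nat and p q r :: real
  assumes p0: "0 \<le> p" and pq: "p < q" and q1: "q \<le> 1" and r: "r = p \<or> r = q"
  defines "x \<equiv> real (Suc m) * (q - p)" and "A \<equiv> real (Suc m) * (r * (1 - r))"
    and "D \<equiv> (\<Sum>k\<le>Suc m. \<bar>bb (Suc m) p k - bb (Suc m) q k\<bar>)"
  shows "x \<le> 2 * (x + 2 * sqrt (2 * (A + x)) + 1) * D"
proof -
  define L where "L = sqrt (2 * (A + x))"
  have x0: "x > 0" using pq unfolding x_def by simp
  have A0: "A \<ge> 0" using r p0 pq q1 unfolding A_def by auto
  have L0: "L > 0" using x0 A0 unfolding L_def by simp
  have L2: "L^2 = 2 * (A + x)" using x0 A0 unfolding L_def by simp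
  define lo where "lo = real m * p - L"
  define hi where "hi = real m * q + L"
  define a where "a = nat (\<lfloor>lo\<rfloor> + 1)"
  define b where "b = nat \<lceil>hi\<rceil>"
  define W where "W = {a..<b}"
  define F where "F = (\<lambda>s t. \<Sum>k\<le>t. bb (Suc m) s k)"
  define S where "S = (\<lambda>s. \<Sum>t\<in>W. F s t)"
  have der: "DERIV S s :> (\<Sum>t\<in>W. - (real (Suc m) * bb m s t))" for s
    unfolding S_def F_def by (intro DERIV_sum F_deriv)
  obtain xi where xi: "p < xi" "xi < q" and mvt: "S q - S p = (q - p) * (\<Sum>t\<in>W. - (real (Suc m) * bb m xi t))"
    using MVT2[OF pq, of S "\<lambda>s. \<Sum>t\<in>W. - (real (Suc m) * bb m s t)"] der by blast
  have win: "k \<in> W" if "k \<le> m" "\<bar>real k - real m * xi\<bar> < L" for k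
  proof -
    have "real m * p \<le> real m * xi" "real m * xi \<le> real m * q"
      using xi by (auto intro: mult_left_mono)
    then have "lo < real k" "real k < hi" using that unfolding lo_def hi_def by auto
    then have "\<lfloor>lo\<rfloor> + 1 \<le> int k" "int k < \<lceil>hi\<rceil>"
      by linarith+
    then show ?thesis unfolding W_def a_def b_def by auto
  qed
  have "0 \<le> xi * (1 - xi)" using xi p0 q1 by auto
  then have "m * xi * (1 - xi) \<le> real (Suc m) * (xi * (1 - xi))"
    by (simp add: distrib_right mult.assoc)
  also have "\<dots> \<le> real (Suc m) * (r * (1 - r) + (q - p))"
    using var_le[of p xi q r] xi p0 q1 r by (intro mult_left_mono) auto
  also have "\<dots> = A + x" unfolding A_def x_def by (simp add: algebra_simps)
  finally have V: "real m * xi * (1 - xi) / L^2 \<le> 1/2" using L2 L0 A0 x0 by (simp add: field_simps)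
  have "(\<Sum>t\<in>W. bb m xi t) \<ge> 1 - real m * xi * (1 - xi) / L^2"
    by (rule bb_cheb) (use xi p0 q1 L0 win in \<open>auto simp: W_def\<close>)
  then have ch: "(\<Sum>t\<in>W. bb m xi t) \<ge> 1/2" using V by linarith
  define sg where "sg = (\<Sum>t\<in>W. bb m xi t)"
  have e: "(\<Sum>t\<in>W. - (real (Suc m) * bb m xi t)) = - (real (Suc m) * sg)"
    unfolding sg_def by (simp only: sum_negf sum_distrib_left)
  have "S p - S q = x * sg"
    using mvt unfolding e x_def by (simp add: algebra_simps)
  then have "S p - S q = x * (\<Sum>t\<in>W. bb m xi t)" unfolding sg_def .
  then have lb: "x / 2 \<le> S p - S q" using ch x0
    by (metis mult_left_mono less_le mult.commute mult_1 divide_inverse times_divide_eq_right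
        divide_le_eq_numeral1(1) div_by_1 zero_less_numeral mult_2_right  mult_le_cancel_left_pos)
  have "S p - S q = (\<Sum>t\<in>W. F p t - F q t)" unfolding S_def by (simp add: sum_subtractf)
  also have "\<dots> \<le> (\<Sum>t\<in>W. D)"
    using partial_le unfolding F_def D_def by (intro sum_mono) (metis abs_le_D1)
  also have "\<dots> = real (card W) * D" by simp
  finally have ub: "S p - S q \<le> real (card W) * D" .
  have cW: "real (card W) \<le> x + 2 * L + 1"
  proof -
    have hi0: "hi > 0" using L0 p0 pq q1 unfolding hi_def by (simp add: add_nonneg_pos)
    have "real (card W) \<le> hi - lo + 1"
    proof (cases "a \<le> b")
      case True
      have "real b = of_int \<lceil>hi\<rceil>" unfolding b_def using hi0 by (simp add: ceiling_le_zero not_le)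
      also have "\<dots> < hi + 1" by linarith
      finally have "real b < hi + 1" .
      moreover have "real a \<ge> of_int (\<lfloor>lo\<rfloor> + 1)" unfolding a_def by linarith
      then have "real a > lo" by linarith
      ultimately show ?thesis using True unfolding W_def by (simp add: of_nat_diff)
    next
      case False
      then show ?thesis unfolding W_def using L0 pq p0 unfolding hi_def lo_def
        by simp (smt (verit) mult_left_mono of_nat_0_le_iff)
    qed
    also have "\<dots> = real m * (q - p) + 2 * L + 1" unfolding hi_def lo_def by (simp add: algebra_simps)
    also have "\<dots> \<le> x + 2 * L + 1" unfolding x_def using pq by (intro add_right_mono mult_right_mono) auto
    finally show ?thesis .
  qed
  have D0: "D \<ge> 0" unfolding D_def by (simp add: sum_nonneg)
  have "x \<le> 2 * (real (card W) * D)" using lb ub by linarith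
  also have "\<dots> \<le> 2 * ((x + 2 * L + 1) * D)" using cW D0 by (intro mult_left_mono mult_right_mono) auto
  finally show ?thesis unfolding L_def by (metis mult.assoc)
qed

lemma l1_eq:
  assumes "0 \<le> p" "p \<le> 1" "0 \<le> q" "q \<le> 1"
  shows "l1_dist (binomial_pmf m p) (binomial_pmf m q) = (\<Sum>k\<le>m. \<bar>bb m p k - bb m q k\<bar>)"
proof -
  have "l1_dist (binomial_pmf m p) (binomial_pmf m q) = infsum (\<lambda>k. \<bar>bb m p k - bb m q k\<bar>) {..m}"
    unfolding l1_dist_def
  proof (rule infsum_cong_neutral)
    fix k assume "k \<in> UNIV - {..m}"
    then show "\<bar>pmf (binomial_pmf m p) k - pmf (binomial_pmf m q) k\<bar> = 0" using assms by simp
  qed (use assms in \<open>auto simp: bb_def\<close>)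
  then show ?thesis by simp
qed

lemma min_ereal_eq: "min (ereal a) (ereal b) = ereal (min a b)"
  by (cases "a \<le> b") (auto simp: min_def)

lemma real_main:
  fixes m :: nat and p q :: real
  assumes m: "m > 0" and p: "0 \<le> p" "p \<le> 1" and q: "0 \<le> q" "q \<le> 1" and pq: "p \<noteq> q"
  defines "x \<equiv> real m * \<bar>p - q\<bar>" and "A \<equiv> real m * (p * (1 - p))"
    and "D \<equiv> (\<Sum>k\<le>m. \<bar>bb m p k - bb m q k\<bar>)"
  shows "x \<le> 12 * max 1 (max x (sqrt A)) * D"
proof -
  obtain m' where m': "m = Suc m'" using m gr0_implies_Suc by blast
  have core': "x \<le> 2 * (x + 2 * sqrt (2 * (A + x)) + 1) * D"
  proof (cases "p < q")
    case True
    then show ?thesis using core[of p q p m'] p q unfolding x_def A_def D_def m' by simp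
  next
    case False
    then have "q < p" using pq by simp
    moreover have "(\<Sum>k\<le>m. \<bar>bb m q k - bb m p k\<bar>) = D" unfolding D_def by (simp add: abs_minus_commute)
    ultimately show ?thesis using core[of q p p m'] p q unfolding x_def A_def m' by simp
  qed
  define M where "M = max 1 (max x (sqrt A))"
  have A0: "A \<ge> 0" using p unfolding A_def by simp
  have x0: "x \<ge> 0" unfolding x_def by simp
  have M1: "M \<ge> 1" "x \<le> M" "sqrt A \<le> M" unfolding M_def by auto
  have "(sqrt A)^2 \<le> M^2" using M1 A0 by (intro power_mono) auto
  then have AM: "A \<le> M^2" using A0 by simp
  have MM: "M * 1 \<le> M * M" using M1 by (intro mult_left_mono) auto
  have xM: "x \<le> M^2" unfolding power2_eq_square using M1(2) MM by linarith
  have "2 * (A + x) \<le> (2 * M)^2" using AM xM by (simp add: power2_eq_square)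
  then have "sqrt (2 * (A + x)) \<le> sqrt ((2 * M)^2)" by (rule real_sqrt_le_mono)
  also have "\<dots> = 2 * M" using M1 by (simp only: real_sqrt_abs abs_of_nonneg)
  finally have "sqrt (2 * (A + x)) \<le> 2 * M" .
  moreover have "2 * (x + 2 * s + 1) \<le> 12 * M" if "s \<le> 2 * M" for s using that M1 by (simp add: algebra_simps)
  ultimately have "2 * (x + 2 * sqrt (2 * (A + x)) + 1) \<le> 12 * M" by blast
  moreover have D0: "D \<ge> 0" unfolding D_def by (simp add: sum_nonneg)
  ultimately have "2 * (x + 2 * sqrt (2 * (A + x)) + 1) * D \<le> 12 * M * D"
    by (rule mult_right_mono)
  then show ?thesis using core' unfolding M_def by linarith
qed

theorem lemma8:
  fixes m :: nat and p q :: real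
  assumes "m > 0" and "0 \<le> p" "p \<le> 1" and "0 \<le> q" "q \<le> 1"
  shows "ereal (l1_dist (binomial_pmf m p) (binomial_pmf m q))
           \<ge> ereal (1/350) * min (ereal (real m * \<bar>p - q\<bar>)) (min (mid_term m p q) 1)"
proof -
  define D where "D = (\<Sum>k\<le>m. \<bar>bb m p k - bb m q k\<bar>)"
  have l1: "l1_dist (binomial_pmf m p) (binomial_pmf m q) = D"
    unfolding D_def using l1_eq assms by simp
  have D0: "D \<ge> 0" unfolding D_def by (simp add: sum_nonneg)
  define x where "x = real m * \<bar>p - q\<bar>"
  define A where "A = real m * (p * (1 - p))"
  show ?thesis
  proof (cases "p = q")
    case True
    then show ?thesis using D0 l1 by (simp add: mid_term_def)
  next
    case pq: False
    have main: "x \<le> 12 * max 1 (max x (sqrt A)) * D"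
      using real_main[OF assms pq] unfolding x_def A_def D_def .
    have x0: "x \<ge> 0" unfolding x_def by simp
    have A0: "A \<ge> 0" using assms unfolding A_def by simp
    obtain c where c: "min (ereal x) (min (mid_term m p q) 1) = ereal c"
      and cM: "c * max 1 (max x (sqrt A)) \<le> x" and c0: "c \<ge> 0"
    proof (cases "p * (1 - p) = 0")
      case True
      then have "A = 0" unfolding A_def by simp
      have "mid_term m p q = \<infinity>" using True pq unfolding mid_term_def by simp
      then have "min (ereal x) (min (mid_term m p q) 1) = min (ereal x) 1" by simp
      also have "\<dots> = ereal (min x 1)" using min_ereal_eq[of x 1] by (simp only: one_ereal_def)
      finally have "min (ereal x) (min (mid_term m p q) 1) = ereal (min x 1)" .
      moreover have "min x 1 * max 1 (max x (sqrt A)) \<le> x" using \<open>A = 0\<close> x0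
        by (cases "x \<le> 1") (simp_all add: min_def max_def)
      moreover have "min x 1 \<ge> 0" using x0 by simp
      ultimately show ?thesis by (rule that)
    next
      case False
      have "p * (1 - p) \<ge> 0" using assms by simp
      then have pp: "p * (1 - p) > 0" using False by linarith
      have Apos: "A > 0" using pp assms unfolding A_def by simp
      have "sqrt (real m) * \<bar>p - q\<bar> / sqrt (p * (1 - p)) = x / sqrt A"
      proof -
        have sA: "sqrt A = sqrt (real m) * sqrt (p * (1 - p))" unfolding A_def by (simp add: real_sqrt_mult)
        have xx: "x = sqrt (real m) * (sqrt (real m) * \<bar>p - q\<bar>)" unfolding x_def by (simp add: mult.assoc[symmetric])
        have "sqrt (real m) \<noteq> 0" using assms by simp
        then show ?thesis unfolding sA xx by (rule mult_divide_mult_cancel_left[symmetric])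

      qed
      then have mt: "mid_term m p q = ereal (x / sqrt A)" using False by (simp add: mid_term_def)
      have "min (ereal x) (min (mid_term m p q) 1) = ereal (min x (min (x / sqrt A) 1))"
        unfolding mt by (simp only: one_ereal_def min_ereal_eq)
      moreover have "min x (min (x / sqrt A) 1) * max 1 (max x (sqrt A)) \<le> x"
      proof -
        let ?c = "min x (min (x / sqrt A) 1)"
        have sA: "sqrt A > 0" using Apos by simp
        have "?c * 1 \<le> x" by simp
        moreover have "?c * x \<le> 1 * x" using x0 by (intro mult_right_mono) auto
        moreover have "max 1 (max x (sqrt A)) = 1 \<or> max 1 (max x (sqrt A)) = x \<or> max 1 (max x (sqrt A)) = sqrt A"
          by (auto simp: max_def)
        moreover have "?c * sqrt A \<le> x"
        proof -
          have "?c \<le> x / sqrt A" by simp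
          then have "?c * sqrt A \<le> x / sqrt A * sqrt A" using sA by (intro mult_right_mono) auto
          then show ?thesis using sA by simp
        qed
        ultimately show ?thesis by fastforce
      qed
      moreover have "min x (min (x / sqrt A) 1) \<ge> 0" using x0 Apos by simp
      ultimately show ?thesis by (rule that)
    qed
    have M1: "max 1 (max x (sqrt A)) \<ge> 1" by simp
    have "c \<le> 12 * D"
    proof -
      have "c * max 1 (max x (sqrt A)) \<le> 12 * D * max 1 (max x (sqrt A))"
        using cM main by (simp add: mult_ac)
      then show ?thesis using M1 by (simp add: mult_le_cancel_right)
    qed
    then have "c / 350 \<le> D" using D0 by simp
    then show ?thesis unfolding l1 c[unfolded x_def] by simp
  qed
qed

end
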